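(* The proportional fair cost sharing mechanism, given by $f_{i,e}(p)=\frac{w_i(e)}{l_e^p}F_e(l_e^p)$ for $e\in p_i$ and $f_{i,e}(p)=0$ otherwise, is REP-expanded.
   Context: GND instance: finite resource set $E$; players $i \in [N]$ with strategy collections $P_i \subseteq 2^E$ and weight vectors $w_i \in \mathbb{Z}_{\geq 1}^E$; constants $q\in\mathbb{Z}_{\ge1}$, $\alpha_1,\dots,\alpha_q > 1$; for each $e$, $\sigma_e \geq 0$, $\xi_{e,j} \geq 0$ (at least one positive), and $F_e(0)=0$, $F_e(l)=\sigma_e+\sum_j \xi_{e,j} l^{\alpha_j}$ for $l>0$. Profile $p=(p_1,\dots,p_N)$, $p_i\in P_i$; load $l_e^p=\sum_{i: e\in p_i} w_i(e)$. A cost sharing mechanism $M=\{f_{i,e}\}$ is REP-expanded if for each $j\in[q]$ there are a nonnegative integer $K_j$ and nonnegative constants $x_{k,j}\in[0,\alpha_j-1]$, $y_{k,j}\in[1,\alpha_j]$, $z_{k,j}$ ($k\in[K_j]$), depending only on $\alpha_j$, with $x_{k,j}+y_{k,j}=\alpha_j$, such that for every profile $p$, player $i$ and resource $e\in p_i$: $$f_{i,e}(p)\le \sigma_e+\sum_{j\in[q]}\xi_{e,j}\sum_{k=1}^{K_j} z_{k,j}\,(l_e^p-w_i(e))^{x_{k,j}}(w_i(e))^{y_{k,j}}.$$ *)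

theory Defs
  imports Complex_Main
begin

text \<open>Real power with the mathematical convention 0^0 = 1 (Isabelle's powr has 0 powr 0 = 0).
  Only used for nonnegative bases.\<close>
definition rpow :: "real \<Rightarrow> real \<Rightarrow> real" where
  "rpow a b = (if b = 0 then 1 else a powr b)"

record 'e gnd =
  res :: "'e set"
  nplayers :: nat
  strats :: "nat \<Rightarrow> 'e set set"
  wt :: "nat \<Rightarrow> 'e \<Rightarrow> nat"
  nq :: nat
  alph :: "nat \<Rightarrow> real"
  sig :: "'e \<Rightarrow> real"
  xi :: "'e \<Rightarrow> nat \<Rightarrow> real"

definition gnd_instance :: "'e gnd \<Rightarrow> bool" where
  "gnd_instance G \<longleftrightarrow>
     finite (res G) \<and>
     (\<forall>i < nplayers G. strats G i \<subseteq> Pow (res G)) \<and>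
     (\<forall>i < nplayers G. \<forall>e \<in> res G. wt G i e \<ge> 1) \<and>
     nq G \<ge> 1 \<and>
     (\<forall>j < nq G. alph G j > 1) \<and>
     (\<forall>e \<in> res G. sig G e \<ge> 0 \<and> (\<forall>j < nq G. xi G e j \<ge> 0) \<and> (\<exists>j < nq G. xi G e j > 0))"

definition is_profile :: "'e gnd \<Rightarrow> (nat \<Rightarrow> 'e set) \<Rightarrow> bool" where
  "is_profile G p \<longleftrightarrow> (\<forall>i < nplayers G. p i \<in> strats G i)"

definition load :: "'e gnd \<Rightarrow> (nat \<Rightarrow> 'e set) \<Rightarrow> 'e \<Rightarrow> nat" where
  "load G p e = (\<Sum>i \<in> {i. i < nplayers G \<and> e \<in> p i}. wt G i e)"

definition cost_fn :: "'e gnd \<Rightarrow> 'e \<Rightarrow> real \<Rightarrow> real" where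
  "cost_fn G e l = (if l = 0 then 0 else sig G e + (\<Sum>j < nq G. xi G e j * l powr alph G j))"

text \<open>A cost sharing mechanism: instance, profile, player, resource \<mapsto> share.\<close>
type_synonym 'e mechanism = "'e gnd \<Rightarrow> (nat \<Rightarrow> 'e set) \<Rightarrow> nat \<Rightarrow> 'e \<Rightarrow> real"

definition proportional_fair :: "'e mechanism" where
  "proportional_fair G p i e =
     (if e \<in> p i then real (wt G i e) / real (load G p e) * cost_fn G e (real (load G p e)) else 0)"

text \<open>REP-expanded: constants K, x, y, z depend only on the exponent alpha.\<close>
definition rep_expanded :: "'e mechanism \<Rightarrow> bool" where
  "rep_expanded M \<longleftrightarrow>
    (\<exists>(K :: real \<Rightarrow> nat) (x :: real \<Rightarrow> nat \<Rightarrow> real) (y :: real \<Rightarrow> nat \<Rightarrow> real) (z :: real \<Rightarrow> nat \<Rightarrow> real).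
      (\<forall>a > 1. \<forall>k < K a. 0 \<le> x a k \<and> x a k \<le> a - 1 \<and> 1 \<le> y a k \<and> y a k \<le> a \<and>
                           x a k + y a k = a \<and> 0 \<le> z a k) \<and>
      (\<forall>G p i e. gnd_instance G \<and> is_profile G p \<and> i < nplayers G \<and> e \<in> p i \<longrightarrow>
         M G p i e \<le> sig G e + (\<Sum>j < nq G. xi G e j *
            (\<Sum>k < K (alph G j). z (alph G j) k *
               rpow (real (load G p e) - real (wt G i e)) (x (alph G j) k) *
               rpow (real (wt G i e)) (y (alph G j) k)))))"

end

theory Submission
  imports Defs
begin

lemma powr_sum_le:
  fixes a b r :: real
  assumes "a \<ge> 0" "b \<ge> 0" "r > 0"
  shows "(a + b) powr r \<le> 2 powr r * (a powr r + b powr r)"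
proof -
  have "(a + b) powr r \<le> (2 * max a b) powr r"
    by (rule powr_mono2) (use assms in auto)
  also have "\<dots> = 2 powr r * (max a b) powr r"
    using assms by (simp add: powr_mult)
  also have "(max a b) powr r \<le> a powr r + b powr r"
    by (cases "a \<le> b") (auto simp: max_def)
  hence "2 powr r * (max a b) powr r \<le> 2 powr r * (a powr r + b powr r)"
    by (simp add: mult_left_mono)
  finally show ?thesis .
qed

lemma key:
  fixes w l a :: real
  assumes w: "w > 0" and wl: "w \<le> l" and a: "a > 1"
  shows "w / l * l powr a \<le> 2 powr (a - 1) * rpow (l - w) (a - 1) * rpow w 1
            + 2 powr (a - 1) * rpow (l - w) 0 * rpow w a"
proof -
  have l: "l > 0" using w wl by linarith
  have "w / l * l powr a = w * l powr (a - 1)"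
    using l by (simp add: powr_diff field_simps)
  also have "l powr (a - 1) = ((l - w) + w) powr (a - 1)" by simp
  also have "\<dots> \<le> 2 powr (a - 1) * ((l - w) powr (a - 1) + w powr (a - 1))"
    by (rule powr_sum_le) (use wl w a in auto)
  finally have "w / l * l powr a \<le> w * (2 powr (a - 1) * ((l - w) powr (a - 1) + w powr (a - 1)))"
    using w by (simp add: mult_left_mono)
  also have "\<dots> = 2 powr (a - 1) * (l - w) powr (a - 1) * w + 2 powr (a - 1) * (w * w powr (a - 1))"
    by (simp add: algebra_simps)
  also have "w * w powr (a - 1) = w powr a"
    using w by (simp add: powr_diff field_simps)
  finally show ?thesis using a w by (simp add: rpow_def)
qed

theorem lemma6p2:
  shows "rep_expanded (proportional_fair :: 'e mechanism)"
  unfolding rep_expanded_def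
proof (rule exI[of _ "\<lambda>a::real. 2::nat"], rule exI[of _ "\<lambda>(a::real) (k::nat). if k = 0 then a - 1 else 0"],
  rule exI[of _ "\<lambda>(a::real) (k::nat). if k = 0 then 1 else a"], rule exI[of _ "\<lambda>(a::real) (k::nat). 2 powr (a - 1)"],
  rule conjI)
  let ?K = "\<lambda>a::real. 2::nat"
  let ?x = "\<lambda>(a::real) (k::nat). if k = 0 then a - 1 else 0"
  let ?y = "\<lambda>(a::real) (k::nat). if k = 0 then 1 else a"
  let ?z = "\<lambda>(a::real) (k::nat). 2 powr (a - 1)"
  show "\<forall>a>1. \<forall>k<?K a. 0 \<le> ?x a k \<and> ?x a k \<le> a - 1 \<and> 1 \<le> ?y a k \<and> ?y a k \<le> a \<and>
                           ?x a k + ?y a k = a \<and> 0 \<le> ?z a k"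
    by auto
  show "\<forall>G p i e. gnd_instance G \<and> is_profile G p \<and> i < nplayers G \<and> e \<in> p i \<longrightarrow>
         proportional_fair G p i e \<le> sig G e + (\<Sum>j < nq G. xi G e j *
            (\<Sum>k < ?K (alph G j). ?z (alph G j) k *
               rpow (real (load G p e) - real (wt G i e)) (?x (alph G j) k) *
               rpow (real (wt G i e)) (?y (alph G j) k)))"
  proof (intro allI impI)
  fix G p i e
  assume H: "gnd_instance G \<and> is_profile G p \<and> i < nplayers G \<and> e \<in> p i"
  hence eres: "e \<in> res G" using H unfolding gnd_instance_def is_profile_def by blast
  have w1: "wt G i e \<ge> 1" using H eres unfolding gnd_instance_def by blast
  have sig: "sig G e \<ge> 0" and xi: "\<And>j. j < nq G \<Longrightarrow> xi G e j \<ge> 0"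
    and alph: "\<And>j. j < nq G \<Longrightarrow> alph G j > 1"
    using H eres unfolding gnd_instance_def by blast+
  define S where "S = {i. i < nplayers G \<and> e \<in> p i}"
  have fin: "finite S" unfolding S_def by auto
  have iS: "i \<in> S" using H unfolding S_def by auto
  have wl: "wt G i e \<le> load G p e"
    unfolding load_def S_def[symmetric] using member_le_sum[OF iS _ fin, of "\<lambda>i. wt G i e"] by simp
  define w where "w = real (wt G i e)"
  define l where "l = real (load G p e)"
  have w0: "w > 0" using w1 unfolding w_def by simp
  have wl': "w \<le> l" using wl unfolding w_def l_def by simp
  have l0: "l \<noteq> 0" using w0 wl' by linarith
  have "proportional_fair G p i e = w / l * (sig G e + (\<Sum>j < nq G. xi G e j * l powr alph G j))"
    using H l0 unfolding proportional_fair_def cost_fn_def w_def l_def by simp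
  also have "\<dots> = w / l * sig G e + (\<Sum>j < nq G. xi G e j * (w / l * l powr alph G j))"
    by (simp add: algebra_simps sum_distrib_left)
  also have "\<dots> \<le> sig G e + (\<Sum>j < nq G. xi G e j *
            (\<Sum>k < ?K (alph G j). ?z (alph G j) k * rpow (l - w) (?x (alph G j) k) * rpow w (?y (alph G j) k)))"
  proof (rule add_mono)
    show "w / l * sig G e \<le> sig G e"
    proof -
      have "w / l \<le> 1" using w0 wl' by simp
      thus ?thesis using sig mult_left_le_one_le[of "sig G e" "w / l"] w0 wl' by (simp add: mult.commute)
    qed
    show "(\<Sum>j < nq G. xi G e j * (w / l * l powr alph G j)) \<le> (\<Sum>j < nq G. xi G e j *
            (\<Sum>k < ?K (alph G j). ?z (alph G j) k * rpow (l - w) (?x (alph G j) k) * rpow w (?y (alph G j) k)))"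
    proof (rule sum_mono)
      fix j assume "j \<in> {..<nq G}"
      hence j: "j < nq G" by simp
      have "(\<Sum>k < ?K (alph G j). ?z (alph G j) k * rpow (l - w) (?x (alph G j) k) * rpow w (?y (alph G j) k))
           = 2 powr (alph G j - 1) * rpow (l - w) (alph G j - 1) * rpow w 1
            + 2 powr (alph G j - 1) * rpow (l - w) 0 * rpow w (alph G j)"
        by (simp add: numeral_2_eq_2)
      moreover have "w / l * l powr alph G j \<le> \<dots>"
        by (rule key[OF w0 wl' alph[OF j]])
      ultimately show "xi G e j * (w / l * l powr alph G j) \<le> xi G e j *
            (\<Sum>k < ?K (alph G j). ?z (alph G j) k * rpow (l - w) (?x (alph G j) k) * rpow w (?y (alph G j) k))"
        using xi[OF j] by (rule_tac mult_left_mono) simp_all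
    qed
  qed
  finally have X: "proportional_fair G p i e \<le> sig G e + (\<Sum>j < nq G. xi G e j *
            (\<Sum>k < ?K (alph G j). ?z (alph G j) k * rpow (l - w) (?x (alph G j) k) * rpow w (?y (alph G j) k)))" .
  show "proportional_fair G p i e \<le> sig G e + (\<Sum>j < nq G. xi G e j *
            (\<Sum>k < ?K (alph G j). ?z (alph G j) k *
               rpow (real (load G p e) - real (wt G i e)) (?x (alph G j) k) *
               rpow (real (wt G i e)) (?y (alph G j) k)))"
    using X by (simp only: w_def l_def)
qed
qed

end
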